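(* Let $n\ge 1$, let $G=P_n$ be the path with vertex set $\{1,\dots,n\}$ and edges $\{i,i+1\}$ for $1\le i<n$, and let $C\subseteq V(G)$ be such that no vertex of $V(G)\setminus C$ is isolated. Let $m_1=n-\delta_1+1$, where $\delta_1=\min_{v\in V(G)}|N\langle v\rangle|$. If $\{1,n\}\subseteq C$ or $C$ is a good configuration for $G$, then $\gamma_{\rm gr}(G;C)=m_1$; otherwise $\gamma_{\rm gr}(G;C)=m_1-1$.
   Context: $N\langle v\rangle = N[v]$ (closed neighborhood) if $v\in C$ and $N\langle v\rangle=N(v)$ (open neighborhood) if $v\notin C$. A sequence $(v_1,\dots,v_k)$ of distinct vertices is legal if $N\langle v_i\rangle\setminus\bigcup_{j<i}N\langle v_j\rangle\neq\emptyset$ for all $i\ge 2$, and dominating if $\bigcup_j N\langle v_j\rangle=V$; $\gamma_{\rm gr}(G;C)$ is the maximum length of a legal dominating sequence. Good configuration (defined for a path with vertices $a_1,\dots,a_n$ in order, applied to $C\cap\{a_1,\dots,a_n\}$; isolated vertices outside $C$ are allowed in this definition): $C$ is a good configuration for the path if (i) $n=1$ and $a_1\in C$; or (ii) $n=2$ and $\{a_1,a_2\}\not\subseteq C$; or (iii) $n\ge 3$ and either $a_1\notin C$ and $C$ is a good configuration for the subpath $(a_3,\dots,a_n)$, or $a_n\notin C$ and $C$ is a good configuration for the subpath $(a_1,\dots,a_{n-2})$. *)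

theory Defs
  imports Main
begin

definition path_verts :: "nat \<Rightarrow> nat set" where
  "path_verts n = {1..n}"

definition path_adj :: "nat \<Rightarrow> nat \<Rightarrow> nat \<Rightarrow> bool" where
  "path_adj n u v \<longleftrightarrow> u \<in> {1..n} \<and> v \<in> {1..n} \<and> (u = v + 1 \<or> v = u + 1)"

definition open_nbhd :: "nat \<Rightarrow> nat \<Rightarrow> nat set" where
  "open_nbhd n v = {u. path_adj n v u}"

definition cnbhd :: "nat \<Rightarrow> nat set \<Rightarrow> nat \<Rightarrow> nat set" where
  "cnbhd n C v = (if v \<in> C then insert v (open_nbhd n v) else open_nbhd n v)"

definition legal_seq :: "nat \<Rightarrow> nat set \<Rightarrow> nat list \<Rightarrow> bool" where
  "legal_seq n C vs \<longleftrightarrow> distinct vs \<and> set vs \<subseteq> path_verts n \<and>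
     (\<forall>i. 1 \<le> i \<and> i < length vs \<longrightarrow>
        cnbhd n C (vs ! i) - (\<Union>j<i. cnbhd n C (vs ! j)) \<noteq> {})"

definition dominating_seq :: "nat \<Rightarrow> nat set \<Rightarrow> nat list \<Rightarrow> bool" where
  "dominating_seq n C vs \<longleftrightarrow> (\<Union>v\<in>set vs. cnbhd n C v) = path_verts n"

definition gamma_gr :: "nat \<Rightarrow> nat set \<Rightarrow> nat" where
  "gamma_gr n C = Max {length vs | vs. legal_seq n C vs \<and> dominating_seq n C vs}"

text \<open>Good configuration for the subpath with vertices a, a+1, ..., a+len-1.\<close>
fun good_config :: "nat set \<Rightarrow> nat \<Rightarrow> nat \<Rightarrow> bool" where
  "good_config C a 0 = False"
| "good_config C a (Suc 0) = (a \<in> C)"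
| "good_config C a (Suc (Suc 0)) = (\<not> {a, a + 1} \<subseteq> C)"
| "good_config C a (Suc (Suc (Suc k))) =
     ((a \<notin> C \<and> good_config C (a + 2) (Suc k)) \<or>
      (a + k + 2 \<notin> C \<and> good_config C a (Suc k)))"

end

theory Submission
  imports Defs
begin


definition nb :: "nat set \<Rightarrow> nat \<Rightarrow> nat \<Rightarrow> nat \<Rightarrow> nat set" where
  "nb C a b v = {u. a \<le> u \<and> u \<le> b \<and> (u = v + 1 \<or> v = u + 1 \<or> (u = v \<and> v \<in> C))}"

fun leg :: "(nat \<Rightarrow> nat set) \<Rightarrow> nat set \<Rightarrow> nat list \<Rightarrow> bool" where
  "leg N S [] = True"
| "leg N S (v # vs) = (\<not> N v \<subseteq> S \<and> leg N (S \<union> N v) vs)"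

definition full :: "nat set \<Rightarrow> nat \<Rightarrow> nat \<Rightarrow> nat list \<Rightarrow> bool" where
  "full C a b vs \<longleftrightarrow> distinct vs \<and> set vs = {a..b} \<and> leg (nb C a b) {} vs"

lemma leg_append: "leg N S (xs @ ys) \<longleftrightarrow> leg N S xs \<and> leg N (S \<union> \<Union>(N ` set xs)) ys"
  by (induction xs arbitrary: S) (auto simp: Un_assoc)

lemma leg_transfer1:
  "leg N' S' xs \<Longrightarrow> \<forall>v\<in>set xs. N v \<inter> I = N' v \<Longrightarrow> S \<inter> I \<subseteq> S' \<Longrightarrow> leg N S xs"
proof (induction xs arbitrary: S S')
  case Nil then show ?case by simp
next
  case (Cons v xs)
  have "\<not> N v \<subseteq> S" using Cons.prems by (simp, blast)
  moreover have "leg N (S \<union> N v) xs"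
    using Cons.IH[of "S' \<union> N' v" "S \<union> N v"] Cons.prems by auto
  ultimately show ?case by simp
qed

lemma leg_transfer2:
  "leg N S xs \<Longrightarrow> \<forall>v\<in>set xs. N v \<subseteq> I \<union> S \<and> N' v = N v \<inter> I \<Longrightarrow> leg N' (S \<inter> I) xs"
proof (induction xs arbitrary: S)
  case Nil then show ?case by simp
next
  case (Cons v xs)
  have "\<not> N' v \<subseteq> S \<inter> I" using Cons.prems by auto
  moreover have "leg N' ((S \<union> N v) \<inter> I) xs"
    using Cons.IH[of "S \<union> N v"] Cons.prems by auto
  moreover have "(S \<union> N v) \<inter> I = S \<inter> I \<union> N' v" using Cons.prems by auto
  ultimately show ?case by simp
qed

lemma leg_card:
  "leg N S xs \<Longrightarrow> finite S \<Longrightarrow> \<forall>v\<in>set xs. finite (N v) \<Longrightarrow>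
   card S + length xs \<le> card (S \<union> \<Union>(N ` set xs))"
proof (induction xs arbitrary: S)
  case Nil then show ?case by simp
next
  case (Cons v xs)
  have f: "finite (S \<union> N v)" using Cons.prems by auto
  have "card S < card (S \<union> N v)"
    using Cons.prems f by (intro psubset_card_mono) auto
  moreover have "card (S \<union> N v) + length xs \<le> card (S \<union> N v \<union> \<Union>(N ` set xs))"
    using Cons.IH[of "S \<union> N v"] Cons.prems f by auto
  ultimately show ?case by (simp add: Un_assoc)
qed

lemma UN_less_Suc: "(\<Union>j<Suc i. f j) = f 0 \<union> (\<Union>j<i. f (Suc j))"
  by (auto simp: less_Suc_eq_0_disj)

lemma leg_index:
  "leg N S xs \<longleftrightarrow> (\<forall>i<length xs. \<not> N (xs!i) \<subseteq> S \<union> (\<Union>j<i. N (xs!j)))"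
proof (induction xs arbitrary: S)
  case Nil then show ?case by simp
next
  case (Cons v xs)
  show ?case
    by (simp add: Cons.IH All_less_Suc2 UN_less_Suc Un_assoc del: UN_simps)
qed

lemma legal_leg:
  "legal_seq n C (v # vs) \<longleftrightarrow> distinct (v # vs) \<and> set (v # vs) \<subseteq> path_verts n \<and>
     leg (cnbhd n C) (cnbhd n C v) vs"
proof -
  let ?N = "cnbhd n C"
  have "(\<forall>i. 1 \<le> i \<and> i < length (v # vs) \<longrightarrow>
        ?N ((v # vs) ! i) - (\<Union>j<i. ?N ((v # vs) ! j)) \<noteq> {})
      \<longleftrightarrow> (\<forall>i<length vs. \<not> ?N (vs!i) \<subseteq> ?N v \<union> (\<Union>j<i. ?N (vs!j)))"
  proof
    assume H: "\<forall>i. 1 \<le> i \<and> i < length (v # vs) \<longrightarrow>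
        ?N ((v # vs) ! i) - (\<Union>j<i. ?N ((v # vs) ! j)) \<noteq> {}"
    show "\<forall>i<length vs. \<not> ?N (vs!i) \<subseteq> ?N v \<union> (\<Union>j<i. ?N (vs!j))"
    proof (intro allI impI)
      fix i assume "i < length vs"
      then have "?N ((v # vs) ! Suc i) - (\<Union>j<Suc i. ?N ((v # vs) ! j)) \<noteq> {}"
        using H[rule_format, of "Suc i"] by simp
      then show "\<not> ?N (vs!i) \<subseteq> ?N v \<union> (\<Union>j<i. ?N (vs!j))"
        by (simp add: UN_less_Suc del: UN_simps)
    qed
  next
    assume H: "\<forall>i<length vs. \<not> ?N (vs!i) \<subseteq> ?N v \<union> (\<Union>j<i. ?N (vs!j))"
    show "\<forall>i. 1 \<le> i \<and> i < length (v # vs) \<longrightarrow>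
        ?N ((v # vs) ! i) - (\<Union>j<i. ?N ((v # vs) ! j)) \<noteq> {}"
    proof (intro allI impI)
      fix i assume i: "1 \<le> i \<and> i < length (v # vs)"
      then obtain k where k: "i = Suc k" "k < length vs" by (cases i) auto
      show "?N ((v # vs) ! i) - (\<Union>j<i. ?N ((v # vs) ! j)) \<noteq> {}"
        using H k by (simp add: UN_less_Suc del: UN_simps)
    qed
  qed
  then show ?thesis unfolding legal_seq_def by (simp add: leg_index)
qed

lemma leg_cong: "\<forall>v\<in>set xs. N v = N' v \<Longrightarrow> leg N S xs = leg N' S xs"
  by (induction xs arbitrary: S) auto

lemma cnbhd_nb: "C \<subseteq> {1..n} \<Longrightarrow> v \<in> {1..n} \<Longrightarrow> cnbhd n C v = nb C 1 n v"
  by (auto simp: cnbhd_def open_nbhd_def path_adj_def nb_def)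

lemma nb_sub: "a \<le> a' \<Longrightarrow> b' \<le> b \<Longrightarrow> nb C a' b' v = nb C a b v \<inter> {a'..b'}"
  by (auto simp: nb_def)

lemma nb_subset: "nb C a b v \<subseteq> {a..b}"
  by (auto simp: nb_def)

lemma finite_nb: "finite (nb C a b v)"
  by (rule finite_subset[OF nb_subset]) simp

lemma G2F: "good_config C a L \<Longrightarrow> \<exists>vs. full C a (a + L - 1) vs"
proof (induction L arbitrary: a rule: less_induct)
  case (less L)
  consider "L = 0" | "L = 1" | "L = 2" | k where "L = Suc (Suc (Suc k))"
    by (metis One_nat_def Suc_1 not0_implies_Suc)
  then show ?case
  proof cases
    case 1 then show ?thesis using less.prems by simp
  next
    case 2
    then have "a \<in> C" using less.prems by simp
    then have "full C a a [a]" by (auto simp: full_def nb_def)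
    then show ?thesis using 2 by auto
  next
    case 3
    then have nc: "\<not> {a, a + 1} \<subseteq> C" using less.prems by (simp add: numeral_2_eq_2)
    show ?thesis
    proof (cases "a \<in> C")
      case False
      have "full C a (a+1) [a, a+1]" using False by (auto simp: full_def nb_def)
      then show ?thesis using 3 by auto
    next
      case True
      then have "a + 1 \<notin> C" using nc by auto
      then have "a+1 \<in> nb C a (a+1) a" "a+1 \<notin> nb C a (a+1) (a+1)" "a \<in> nb C a (a+1) (a+1)"
        by (auto simp: nb_def)
      then have "full C a (a+1) [a+1, a]" by (auto simp: full_def)
      then show ?thesis using 3 by auto
    qed
  next
    case 4
    define b where "b = a + k + 2"
    have bL: "a + L - 1 = b" using 4 b_def by simp
    have "(a \<notin> C \<and> good_config C (a + 2) (Suc k)) \<or> (b \<notin> C \<and> good_config C a (Suc k))"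
      using less.prems 4 b_def by simp
    then show ?thesis
    proof
      assume H: "a \<notin> C \<and> good_config C (a + 2) (Suc k)"
      then obtain vs' where f': "full C (a+2) b vs'"
        using less.IH[of "Suc k" "a+2"] 4 b_def by auto
      let ?N = "nb C a b" and ?N' = "nb C (a+2) b"
      have Na: "?N a = {a+1}" using H b_def by (auto simp: nb_def)
      have sv: "set vs' = {a+2..b}" and dv: "distinct vs'" and lv: "leg ?N' {} vs'"
        using f' by (auto simp: full_def)
      have "leg ?N {a+1} vs'"
        by (rule leg_transfer1[OF lv, of _ "{a+2..b}"]) (auto simp: nb_def)
      moreover have "\<not> ?N (a+1) \<subseteq> {a+1} \<union> \<Union>(?N ` set vs')"
      proof -
        have "a \<in> ?N (a+1)" using b_def by (auto simp: nb_def)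
        moreover have "a \<notin> \<Union>(?N ` set vs')" using sv by (auto simp: nb_def)
        ultimately show ?thesis by auto
      qed
      ultimately have "leg ?N {} (a # vs' @ [a+1])"
        using Na by (simp add: leg_append)
      moreover have "set (a # vs' @ [a+1]) = {a..b}" using sv b_def by auto
      moreover have "distinct (a # vs' @ [a+1])" using sv dv by auto
      ultimately have "full C a b (a # vs' @ [a+1])" by (simp add: full_def)
      then show ?thesis using bL by auto
    next
      assume H: "b \<notin> C \<and> good_config C a (Suc k)"
      then obtain vs' where f': "full C a (b-2) vs'"
        using less.IH[of "Suc k" "a"] 4 b_def by auto
      let ?N = "nb C a b" and ?N' = "nb C a (b-2)"
      have Nb: "?N b = {b-1}" using H b_def by (auto simp: nb_def)
      have sv: "set vs' = {a..b-2}" and dv: "distinct vs'" and lv: "leg ?N' {} vs'"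
        using f' by (auto simp: full_def)
      have hb: "b \<ge> a + 2" using b_def by simp
      have "leg ?N {b-1} vs'"
        by (rule leg_transfer1[OF lv, of _ "{a..b-2}"]) (use hb in \<open>auto simp: nb_def\<close>)
      moreover have "\<not> ?N (b-1) \<subseteq> {b-1} \<union> \<Union>(?N ` set vs')"
      proof -
        have "b \<in> ?N (b-1)" using b_def by (auto simp: nb_def)
        moreover have "b \<notin> \<Union>(?N ` set vs')" using sv b_def by (auto simp: nb_def)
        ultimately show ?thesis using b_def by auto
      qed
      ultimately have "leg ?N {} (b # vs' @ [b-1])"
        using Nb by (simp add: leg_append)
      moreover have "set (b # vs' @ [b-1]) = {a..b}" using sv b_def by auto
      moreover have "distinct (b # vs' @ [b-1])"
      proof -
        have "b \<ge> a + 2" using b_def by simp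
        then show ?thesis using sv dv by auto
      qed
      ultimately have "full C a b (b # vs' @ [b-1])" by (simp add: full_def)
      then show ?thesis using bL by auto
    qed
  qed
qed

lemma F2G: "full C a b vs \<Longrightarrow> a \<le> b \<Longrightarrow> good_config C a (Suc b - a)"
proof (induction "b - a" arbitrary: a b vs rule: less_induct)
  case less
  let ?N = "nb C a b"
  have dv: "distinct vs" and sv: "set vs = {a..b}" and lv: "leg ?N {} vs"
    using less.prems by (auto simp: full_def)
  show ?case
  proof (cases "a = b")
    case True
    obtain v vs' where vs: "vs = v # vs'" using sv True by (cases vs) auto
    have "v = a" using sv vs True by auto
    then have "?N a \<noteq> {}" using lv vs by auto
    then have "a \<in> C" using True by (auto simp: nb_def)
    then show ?thesis using True by simp
  next
    case False
    then have ab: "a < b" using less.prems by simp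
    obtain ws w where vs: "vs = ws @ [w]" using sv ab by (cases vs rule: rev_exhaust) auto
    have "\<not> ?N w \<subseteq> \<Union>(?N ` set ws)" using lv vs by (simp add: leg_append)
    then obtain x where xw: "x \<in> ?N w" and xn: "\<forall>u\<in>set ws. x \<notin> ?N u" by auto
    have sws: "set ws = {a..b} - {w}" and w: "w \<in> {a..b}" using dv sv vs by auto
    have x: "x \<in> {a..b}" using xw nb_subset by blast
    have key: "\<And>u. u \<in> {a..b} \<Longrightarrow> x \<in> ?N u \<Longrightarrow> u = w" using xn sws by blast
    have xC: "x \<notin> C"
    proof
      assume "x \<in> C"
      then have "x \<in> ?N x" using x by (auto simp: nb_def)
      then have "x = w" using key x by blast
      show False
      proof (cases "x < b")
        case True
        then have "x \<in> ?N (x+1)" using x by (auto simp: nb_def)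
        then have "x + 1 = w" using key[of "x+1"] True x by simp
        then show False using \<open>x = w\<close> by simp
      next
        case False
        then have "x \<in> ?N (x-1)" using x ab by (auto simp: nb_def)
        then have "x - 1 = w" using key[of "x-1"] False x ab by simp
        then show False using \<open>x = w\<close> False x ab by simp
      qed
    qed
    have up: "w = x + 1" if "x < b"
    proof -
      have "x \<in> ?N (x+1)" using x that by (auto simp: nb_def)
      then show ?thesis using key[of "x+1"] x that by simp
    qed
    have dn: "w = x - 1" if "a < x"
    proof -
      have "x \<in> ?N (x-1)" using x that by (auto simp: nb_def)
      moreover have "x - 1 \<in> {a..b}" using x that by auto
      ultimately show ?thesis using key[of "x-1"] by simp
    qed
    have xab: "x = a \<or> x = b"
    proof (rule ccontr)
      assume "\<not> (x = a \<or> x = b)"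
      then have "a < x" "x < b" using x by auto
      then have "w = x + 1" "w = x - 1" using up dn by auto
      then show False by simp
    qed
    show ?thesis
    proof (cases "x = a")
      case True
      have wa: "w = a + 1" using up True ab by simp
      show ?thesis
      proof (cases "b = a + 1")
        case True
        then have "Suc b - a = Suc (Suc 0)" by simp
        then show ?thesis using xC \<open>x = a\<close> by simp
      next
        case False
        then have b2: "a + 2 \<le> b" using ab by simp
        define k where "k = b - a - 2"
        have Lk: "Suc b - a = Suc (Suc (Suc k))" using b2 k_def by simp
        have aC: "a \<notin> C" using xC True by simp
        have "a \<in> set ws" using sws wa ab by auto
        then obtain p q where ws: "ws = p @ a # q" by (meson split_list)
        have vs2: "vs = p @ a # q @ [a+1]" using vs ws wa by simp
        have Na: "?N a = {a+1}" using aC ab by (auto simp: nb_def)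
        have lp: "leg ?N {} p" and la: "\<not> ?N a \<subseteq> \<Union>(?N ` set p)"
          and lq: "leg ?N (\<Union>(?N ` set p) \<union> ?N a) q"
          using lv vs2 by (simp_all add: leg_append)
        have a2p: "a + 2 \<notin> set p"
        proof
          assume "a + 2 \<in> set p"
          moreover have "a + 1 \<in> ?N (a+2)" using b2 by (auto simp: nb_def)
          ultimately show False using la Na by auto
        qed
        have sv2: "set vs = set p \<union> set q \<union> {a, a+1}" using vs2 by auto
        have nin: "a \<notin> set p \<union> set q" "a+1 \<notin> set p \<union> set q" using dv vs2 by auto
        have dpq: "distinct (p @ q)" using dv vs2 by auto
        have spq0: "set p \<union> set q = {a+2..b}"
        proof -
          have "set p \<union> set q = {a..b} - {a, a+1}" using sv sv2 nin by blast
          also have "\<dots> = {a+2..b}" by auto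
          finally show ?thesis .
        qed
        then have spq: "set (p @ q) = {a+2..b}" by simp
        have sp: "set p \<subseteq> {a+3..b}"
        proof
          fix y assume "y \<in> set p"
          then have "y \<in> {a+2..b}" "y \<noteq> a+2" using spq0 a2p by auto
          then show "y \<in> {a+3..b}" by auto
        qed
        let ?I = "{a+2..b}" and ?N' = "nb C (a+2) b"
        have N'eq: "\<And>v. ?N' v = ?N v \<inter> ?I" by (rule nb_sub) auto
        have Np: "\<And>v. v \<in> set p \<Longrightarrow> ?N v \<subseteq> ?I" using sp by (auto simp: nb_def)
        have lp': "leg ?N' ({} \<inter> ?I) p"
          by (rule leg_transfer2[OF lp]) (use Np N'eq in auto)
        have "leg ?N' ((\<Union>(?N ` set p) \<union> ?N a) \<inter> ?I) q"
          by (rule leg_transfer2[OF lq]) (use N'eq Na spq in \<open>auto simp: nb_def\<close>)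
        moreover have "(\<Union>(?N ` set p) \<union> ?N a) \<inter> ?I = \<Union>(?N' ` set p)"
          using Np N'eq Na by auto
        ultimately have lq': "leg ?N' (\<Union>(?N' ` set p)) q" by simp
        have "leg ?N' {} (p @ q)" using lp' lq' by (simp add: leg_append)
        then have fpq: "full C (a+2) b (p @ q)" using dpq spq by (simp add: full_def)
        have "good_config C (a+2) (Suc b - (a+2))"
          by (rule less.hyps) (use b2 fpq in auto)
        moreover have "Suc b - (a+2) = Suc k" using k_def b2 by simp
        ultimately show ?thesis using Lk aC by simp
      qed
    next
      case False
      then have xb: "x = b" using xab by simp
      have wb: "w = b - 1" using dn xb ab by simp
      have bC: "b \<notin> C" using xC xb by simp
      show ?thesis
      proof (cases "b = a + 1")
        case True
        then have "Suc b - a = Suc (Suc 0)" by simp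
        then show ?thesis using bC True by (simp only:) simp
      next
        case False
        then have b2: "a + 2 \<le> b" using ab by simp
        define k where "k = b - a - 2"
        have Lk: "Suc b - a = Suc (Suc (Suc k))" using b2 k_def by simp
        have bk: "a + k + 2 = b" using b2 k_def by simp
        have "b \<in> set ws" using sws wb ab by auto
        then obtain p q where ws: "ws = p @ b # q" by (meson split_list)
        have vs2: "vs = p @ b # q @ [b-1]" using vs ws wb by simp
        have Nb: "?N b = {b-1}" using bC ab by (auto simp: nb_def)
        have lp: "leg ?N {} p" and la: "\<not> ?N b \<subseteq> \<Union>(?N ` set p)"
          and lq: "leg ?N (\<Union>(?N ` set p) \<union> ?N b) q"
          using lv vs2 by (simp_all add: leg_append)
        have b2p: "b - 2 \<notin> set p"
        proof
          assume "b - 2 \<in> set p"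
          moreover have "b - 1 \<in> ?N (b-2)" using b2 by (auto simp: nb_def)
          ultimately show False using la Nb by auto
        qed
        have sv2: "set vs = set p \<union> set q \<union> {b, b-1}" using vs2 by auto
        have nin: "b \<notin> set p \<union> set q" "b-1 \<notin> set p \<union> set q" using dv vs2 by auto
        have dpq: "distinct (p @ q)" using dv vs2 by auto
        have spq0: "set p \<union> set q = {a..b-2}"
        proof -
          have "set p \<union> set q = {a..b} - {b, b-1}" using sv sv2 nin by blast
          also have "\<dots> = {a..b-2}" using b2 by auto
          finally show ?thesis .
        qed
        then have spq: "set (p @ q) = {a..b-2}" by simp
        have sp: "set p \<subseteq> {a..<b-2}"
        proof
          fix y assume "y \<in> set p"
          then have "y \<in> {a..b-2}" "y \<noteq> b-2" using spq0 b2p by auto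
          then show "y \<in> {a..<b-2}" by auto
        qed
        let ?I = "{a..b-2}" and ?N' = "nb C a (b-2)"
        have N'eq: "\<And>v. ?N' v = ?N v \<inter> ?I" by (rule nb_sub) auto
        have Np: "?N v \<subseteq> ?I" if "v \<in> set p" for v
        proof -
          have "a \<le> v" "v < b - 2" using sp that by auto
          then show ?thesis using b2 by (auto simp: nb_def)
        qed
        have lp': "leg ?N' ({} \<inter> ?I) p"
          by (rule leg_transfer2[OF lp]) (use Np N'eq in auto)
        have Nq: "?N v \<subseteq> ?I \<union> {b-1}" if "v \<in> set q" for v
        proof -
          have "a \<le> v" "v \<le> b - 2" using spq0 that by auto
          then show ?thesis using b2 by (auto simp: nb_def)
        qed
        have "leg ?N' ((\<Union>(?N ` set p) \<union> ?N b) \<inter> ?I) q"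
          by (rule leg_transfer2[OF lq]) (use N'eq Nb Nq in blast)
        moreover have "(\<Union>(?N ` set p) \<union> ?N b) \<inter> ?I = \<Union>(?N' ` set p)"
          using Np N'eq Nb b2 by auto
        ultimately have lq': "leg ?N' (\<Union>(?N' ` set p)) q" by simp
        have "leg ?N' {} (p @ q)" using lp' lq' by (simp add: leg_append)
        then have fpq: "full C a (b-2) (p @ q)" using dpq spq by (simp add: full_def)
        have "good_config C a (Suc (b-2) - a)"
          by (rule less.hyps) (use b2 fpq in auto)
        moreover have "Suc (b-2) - a = Suc k" using k_def b2 by simp
        ultimately show ?thesis using Lk bC bk by simp
      qed
    qed
  qed
qed



lemma nb_sym: "y \<in> {a..b} \<Longrightarrow> z \<in> nb C a b y \<Longrightarrow> y \<in> nb C a b z"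
  by (auto simp: nb_def)

lemma legal_iff:
  assumes "C \<subseteq> {1..n}" "set (v # vs) \<subseteq> {1..n}"
  shows "legal_seq n C (v # vs) \<longleftrightarrow> distinct (v # vs) \<and> leg (nb C 1 n) (nb C 1 n v) vs"
proof -
  have "cnbhd n C v = nb C 1 n v" using assms by (intro cnbhd_nb) auto
  moreover have "\<forall>w\<in>set vs. cnbhd n C w = nb C 1 n w"
  proof
    fix w assume "w \<in> set vs"
    then have "w \<in> {1..n}" using assms by auto
    then show "cnbhd n C w = nb C 1 n w" by (rule cnbhd_nb[OF assms(1)])
  qed
  then have "leg (cnbhd n C) S vs = leg (nb C 1 n) S vs" for S
    by (rule leg_cong)
  ultimately show ?thesis using assms by (simp add: legal_leg path_verts_def)
qed

lemma dom_iff: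
  assumes "C \<subseteq> {1..n}" "set vs \<subseteq> {1..n}"
  shows "dominating_seq n C vs \<longleftrightarrow> \<Union>(nb C 1 n ` set vs) = {1..n}"
proof -
  have "\<Union>(cnbhd n C ` set vs) = \<Union>(nb C 1 n ` set vs)"
    using assms cnbhd_nb[OF assms(1)] by (intro SUP_cong) auto
  then show ?thesis by (simp add: dominating_seq_def path_verts_def)
qed

lemma legal_length: "legal_seq n C vs \<Longrightarrow> length vs \<le> n"
proof -
  assume "legal_seq n C vs"
  then have "distinct vs" "set vs \<subseteq> {1..n}" by (auto simp: legal_seq_def path_verts_def)
  then show ?thesis using card_mono[of "{1..n}" "set vs"] by (simp add: distinct_card)
qed

lemma leg_start: "m \<le> n \<Longrightarrow> leg (nb C 1 n) {} [1..<m]"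
proof (induction m)
  case 0 then show ?case by simp
next
  case (Suc m)
  show ?case
  proof (cases "m = 0")
    case True then show ?thesis by simp
  next
    case False
    have "Suc m \<in> nb C 1 n m" using Suc.prems by (auto simp: nb_def)
    moreover have "Suc m \<notin> \<Union>(nb C 1 n ` set [1..<m])" by (auto simp: nb_def)
    ultimately have "\<not> nb C 1 n m \<subseteq> {} \<union> \<Union>(nb C 1 n ` set [1..<m])" by blast
    then show ?thesis using Suc False by (simp add: leg_append)
  qed
qed

lemma leg_extend:
  assumes cov: "\<forall>y\<in>{1..n}. \<exists>u\<in>{1..n}. y \<in> nb C 1 n u"
  shows "leg (nb C 1 n) {} xs \<Longrightarrow> distinct xs \<Longrightarrow> set xs \<subseteq> {1..n} \<Longrightarrow>
    \<exists>ys. leg (nb C 1 n) {} ys \<and> distinct ys \<and> set ys \<subseteq> {1..n} \<and> length xs \<le> length ys \<and>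
         \<Union>(nb C 1 n ` set ys) = {1..n}"
proof (induction "n - length xs" arbitrary: xs rule: less_induct)
  case less
  let ?N = "nb C 1 n"
  show ?case
  proof (cases "\<Union>(?N ` set xs) = {1..n}")
    case True then show ?thesis using less.prems by blast
  next
    case False
    have "\<Union>(?N ` set xs) \<subseteq> {1..n}" using nb_subset by blast
    with False obtain y where y: "y \<in> {1..n}" "y \<notin> \<Union>(?N ` set xs)" by blast
    then obtain u where u: "u \<in> {1..n}" "y \<in> ?N u" using cov by blast
    have un: "u \<notin> set xs" using y u by blast
    have l2: "leg ?N {} (xs @ [u])" using less.prems(1) u y by (auto simp: leg_append)
    have d2: "distinct (xs @ [u])" using less.prems(2) un by simp
    have s2: "set (xs @ [u]) \<subseteq> {1..n}" using less.prems(3) u by simp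
    have "length (xs @ [u]) \<le> n"
      using card_mono[of "{1..n}" "set (xs @ [u])"] s2 d2 by (simp add: distinct_card)
    then have "n - length (xs @ [u]) < n - length xs" by simp
    from less.hyps[OF this l2 d2 s2] show ?thesis by fastforce
  qed
qed

lemma lower:
  assumes C: "C \<subseteq> {1..n}" and NE: "\<forall>v\<in>{1..n}. nb C 1 n v \<noteq> {}" and n: "n \<ge> 1"
  shows "\<exists>vs. legal_seq n C vs \<and> dominating_seq n C vs \<and> n - 1 \<le> length vs \<and> vs \<noteq> []"
proof -
  let ?N = "nb C 1 n"
  have cov: "\<forall>y\<in>{1..n}. \<exists>u\<in>{1..n}. y \<in> ?N u"
  proof
    fix y assume y: "y \<in> {1..n}"
    then obtain z where z: "z \<in> ?N y" using NE by blast
    then have "z \<in> {1..n}" using nb_subset by blast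
    moreover have "y \<in> ?N z" using nb_sym[OF y z] .
    ultimately show "\<exists>u\<in>{1..n}. y \<in> ?N u" by blast
  qed
  obtain ys where ys: "leg ?N {} ys" "distinct ys" "set ys \<subseteq> {1..n}"
    "length [1..<n] \<le> length ys" "\<Union>(?N ` set ys) = {1..n}"
    using leg_extend[OF cov leg_start[of n n C]] by fastforce
  have "ys \<noteq> []" using ys(5) n by auto
  then obtain v ws where vws: "ys = v # ws" by (cases ys) auto
  have "leg ?N (?N v) ws" using ys(1) vws by simp
  then have "legal_seq n C ys" using legal_iff[OF C] ys vws by simp
  moreover have "dominating_seq n C ys" using dom_iff[OF C ys(3)] ys(5) by simp
  ultimately show ?thesis using ys(4) vws by auto
qed

lemma card2:
  assumes C: "C \<subseteq> {1..n}" and "1 \<in> C" "n \<in> C" "n \<ge> 2" and v: "v \<in> {1..n}"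
  shows "2 \<le> card (nb C 1 n v)"
proof -
  obtain p q where pq: "p \<noteq> q" "p \<in> nb C 1 n v" "q \<in> nb C 1 n v"
  proof (cases "v \<in> C")
    case True
    show ?thesis
    proof (cases "v < n")
      case True
      show ?thesis by (rule that[of v "v+1"]) (use True \<open>v \<in> C\<close> v in \<open>auto simp: nb_def\<close>)
    next
      case False
      show ?thesis by (rule that[of v "v-1"]) (use False \<open>v \<in> C\<close> v assms in \<open>auto simp: nb_def\<close>)
    qed
  next
    case False
    then have "1 < v" "v < n" using v assms by (auto simp: le_less)
    show ?thesis by (rule that[of "v-1" "v+1"]) (use \<open>1 < v\<close> \<open>v < n\<close> in \<open>auto simp: nb_def\<close>)
  qed
  then have "card {p, q} \<le> card (nb C 1 n v)"
    by (intro card_mono finite_nb) auto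
  then show ?thesis using pq by simp
qed

lemma upper2:
  assumes C: "C \<subseteq> {1..n}" and "1 \<in> C" "n \<in> C" "n \<ge> 2" and L: "legal_seq n C vs"
  shows "length vs \<le> n - 1"
proof (cases vs)
  case Nil then show ?thesis by simp
next
  case (Cons v ws)
  let ?N = "nb C 1 n"
  have s: "set vs \<subseteq> {1..n}" using L by (auto simp: legal_seq_def path_verts_def)
  then have lw: "leg ?N (?N v) ws" using legal_iff[OF C] L Cons by auto
  have "card (?N v) + length ws \<le> card (?N v \<union> \<Union>(?N ` set ws))"
    by (rule leg_card[OF lw]) (auto simp: finite_nb)
  also have "\<dots> \<le> card {1..n}"
  proof (rule card_mono)
    show "?N v \<union> \<Union>(?N ` set ws) \<subseteq> {1..n}" using nb_subset by blast
  qed simp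
  finally have "card (?N v) + length ws \<le> n" by simp
  moreover have "2 \<le> card (?N v)" using card2[OF assms(1-4)] s Cons by auto
  ultimately show ?thesis using Cons by simp
qed

lemma full_good:
  assumes C: "C \<subseteq> {1..n}" and NE: "\<forall>v\<in>{1..n}. nb C 1 n v \<noteq> {}"
    and L: "legal_seq n C vs" and len: "length vs = n" and n: "n \<ge> 1"
  shows "good_config C 1 n"
proof -
  let ?N = "nb C 1 n"
  have d: "distinct vs" and s: "set vs \<subseteq> {1..n}" using L by (auto simp: legal_seq_def path_verts_def)
  have sv: "set vs = {1..n}"
    using card_subset_eq[OF _ s] d len by (simp add: distinct_card)
  obtain v ws where vws: "vs = v # ws" using len n by (cases vs) auto
  have "leg ?N (?N v) ws" using legal_iff[OF C] L vws s by auto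
  moreover have "?N v \<noteq> {}" using NE s vws by auto
  ultimately have "leg ?N {} vs" using vws by simp
  then have "full C 1 n vs" using d sv by (simp add: full_def)
  from F2G[OF this] n show ?thesis by simp
qed

lemma good_full:
  assumes C: "C \<subseteq> {1..n}" and g: "good_config C 1 n"
  shows "\<exists>vs. legal_seq n C vs \<and> dominating_seq n C vs \<and> length vs = n"
proof -
  let ?N = "nb C 1 n"
  have n: "n \<ge> 1" using g by (cases n) auto
  obtain vs where f0: "full C 1 (1 + n - 1) vs" using G2F[OF g] by blast
  have f: "full C 1 n vs" using f0 n by simp
  then have d: "distinct vs" and sv: "set vs = {1..n}" and l: "leg ?N {} vs"
    by (auto simp: full_def)
  have len: "length vs = n" using d sv distinct_card by fastforce
  obtain v ws where vws: "vs = v # ws" using len n by (cases vs) auto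
  have s2: "set (v # ws) \<subseteq> {1..n}" using sv vws by simp
  have "leg ?N (?N v) ws" using l vws by simp
  then have "legal_seq n C vs" using legal_iff[OF C s2] d vws by simp
  moreover have "dominating_seq n C vs"
  proof -
    have "card ({}::nat set) + length vs \<le> card ({} \<union> \<Union>(?N ` set vs))"
      by (rule leg_card[OF l]) (auto simp: finite_nb)
    moreover have sub: "\<Union>(?N ` set vs) \<subseteq> {1..n}" using nb_subset by blast
    moreover have "card (\<Union>(?N ` set vs)) \<le> n" using card_mono[OF _ sub] by simp
    ultimately have "\<Union>(?N ` set vs) = {1..n}"
      using len sub by (intro card_subset_eq) auto
    then show ?thesis using dom_iff[OF C] sv by simp
  qed
  ultimately show ?thesis using len by blast
qed

theorem proposition3:
  fixes n :: nat and C :: "nat set"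
  assumes "n \<ge> 1"
    and "C \<subseteq> path_verts n"
    and "\<forall>v \<in> path_verts n - C. open_nbhd n v \<noteq> {}"
  shows "let \<delta>1 = Min {card (cnbhd n C v) | v. v \<in> path_verts n};
             m1 = n + 1 - \<delta>1
         in (if {1, n} \<subseteq> C \<or> good_config C 1 n
             then gamma_gr n C = m1 else gamma_gr n C = m1 - 1)"
proof -
  let ?N = "nb C 1 n"
  have n: "n \<ge> 1" using assms(1) .
  have C: "C \<subseteq> {1..n}" using assms(2) by (simp add: path_verts_def)
  have NE: "\<forall>v\<in>{1..n}. ?N v \<noteq> {}"
  proof
    fix v assume v: "v \<in> {1..n}"
    show "?N v \<noteq> {}"
    proof (cases "v \<in> C")
      case True then have "v \<in> ?N v" using v by (auto simp: nb_def)
      then show ?thesis by blast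
    next
      case False
      then have "open_nbhd n v \<noteq> {}" using assms(3) v by (auto simp: path_verts_def)
      moreover have "open_nbhd n v = cnbhd n C v" using False by (simp add: cnbhd_def)
      ultimately show ?thesis using cnbhd_nb[OF C v] by simp
    qed
  qed
  have D: "{card (cnbhd n C v) | v. v \<in> path_verts n} = (\<lambda>v. card (?N v)) ` {1..n}"
  proof -
    have "{card (cnbhd n C v) | v. v \<in> path_verts n} = (\<lambda>v. card (cnbhd n C v)) ` {1..n}"
      by (auto simp: path_verts_def)
    also have "\<dots> = (\<lambda>v. card (?N v)) ` {1..n}" using cnbhd_nb[OF C] by (intro image_cong) auto
    finally show ?thesis .
  qed
  have fD: "finite ((\<lambda>v. card (?N v)) ` {1..n})" by simp
  define S where "S = {length vs | vs. legal_seq n C vs \<and> dominating_seq n C vs}"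
  have G: "gamma_gr n C = Max S" by (simp add: gamma_gr_def S_def)
  have fS: "finite S"
  proof (rule finite_subset)
    show "S \<subseteq> {..n}" using legal_length by (auto simp: S_def)
  qed simp
  obtain vs0 where vs0: "legal_seq n C vs0" "dominating_seq n C vs0" "n - 1 \<le> length vs0" "vs0 \<noteq> []"
    using lower[OF C NE n] by blast
  have neS: "S \<noteq> {}" using vs0 by (auto simp: S_def)
  have Gge: "n - 1 \<le> gamma_gr n C" "1 \<le> gamma_gr n C"
  proof -
    have "length vs0 \<in> S" using vs0 by (auto simp: S_def)
    then have "length vs0 \<le> Max S" using fS by simp
    then show "n - 1 \<le> gamma_gr n C" "1 \<le> gamma_gr n C" using vs0 G by (auto simp: neq_Nil_conv)
  qed
  have "Max S \<in> S" using fS neS by simp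
  then obtain vg where vg: "legal_seq n C vg" "dominating_seq n C vg" "length vg = gamma_gr n C"
    using G by (auto simp: S_def)
  have Gle: "gamma_gr n C \<le> n" using legal_length[OF vg(1)] vg(3) by simp
  show ?thesis
  proof (cases "{1, n} \<subseteq> C")
    case True
    show ?thesis
    proof (cases "n = 1")
      case True
      have "?N 1 = {1}" using \<open>{1, n} \<subseteq> C\<close> True by (auto simp: nb_def)
      then have "Min {card (cnbhd n C v) | v. v \<in> path_verts n} = 1" using D True by simp
      then show ?thesis using \<open>{1, n} \<subseteq> C\<close> Gge Gle True by (simp add: Let_def)
    next
      case False
      then have n2: "n \<ge> 2" using n by simp
      have "Min ((\<lambda>v. card (?N v)) ` {1..n}) = 2"
      proof (rule Min_eqI[OF fD])
        show "\<And>y. y \<in> (\<lambda>v. card (?N v)) ` {1..n} \<Longrightarrow> 2 \<le> y"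
          using card2[OF C _ _ n2] True by auto
        have "?N 1 = {1, 2}" using True n2 by (auto simp: nb_def)
        then have "card (?N 1) = 2" by simp
        then show "2 \<in> (\<lambda>v. card (?N v)) ` {1..n}" using n
          by (metis atLeastAtMost_iff image_eqI order_refl)
      qed
      then have "Min {card (cnbhd n C v) | v. v \<in> path_verts n} = 2" using D by simp
      moreover have "gamma_gr n C \<le> n - 1" using upper2[OF C _ _ n2 vg(1)] True vg(3) by simp
      ultimately show ?thesis using True Gge by (simp add: Let_def)
    qed
  next
    case False
    then obtain e where e: "e \<in> {1, n}" "e \<notin> C" by blast
    have n2: "n \<ge> 2"
    proof (rule ccontr)
      assume "\<not> n \<ge> 2"
      then have "n = 1" using n by simp
      then have "?N 1 = {}" using e by (auto simp: nb_def)
      then show False using NE \<open>n = 1\<close> by simp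
    qed
    have "Min ((\<lambda>v. card (?N v)) ` {1..n}) = 1"
    proof (rule Min_eqI[OF fD])
      show "\<And>y. y \<in> (\<lambda>v. card (?N v)) ` {1..n} \<Longrightarrow> 1 \<le> y"
      proof -
        fix y assume "y \<in> (\<lambda>v. card (?N v)) ` {1..n}"
        then obtain v where "v \<in> {1..n}" "y = card (?N v)" by blast
        then show "1 \<le> y" using NE finite_nb[of C 1 n v]
          by (simp add: Suc_le_eq card_gt_0_iff)
      qed
      have "card (?N e) = 1"
      proof (cases "e = 1")
        case True
        then have "?N e = {2}" using e n2 by (auto simp: nb_def)
        then show ?thesis by simp
      next
        case False
        then have "e = n" using e by simp
        then have "?N e = {n - 1}" using e n2 by (auto simp: nb_def)
        then show ?thesis by simp
      qed
      moreover have "e \<in> {1..n}" using e n by auto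
      ultimately show "1 \<in> (\<lambda>v. card (?N v)) ` {1..n}" by force
    qed
    then have M: "Min {card (cnbhd n C v) | v. v \<in> path_verts n} = 1" using D by simp
    show ?thesis
    proof (cases "good_config C 1 n")
      case True
      obtain vs where "legal_seq n C vs" "dominating_seq n C vs" "length vs = n"
        using good_full[OF C True] by blast
      then have "n \<in> S" by (auto simp: S_def)
      then have "n \<le> gamma_gr n C" using G fS by simp
      then show ?thesis using M True Gle by (simp add: Let_def)
    next
      case ng: False
      have "gamma_gr n C \<noteq> n"
      proof
        assume "gamma_gr n C = n"
        then have "good_config C 1 n" using full_good[OF C NE vg(1) _ n] vg(3) by simp
        then show False using ng by simp
      qed
      then have "gamma_gr n C = n - 1" using Gle Gge by simp
      then show ?thesis using M ng False by (auto simp: Let_def)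
    qed
  qed
qed

end
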